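(* For a sequence $\{t_n\}_{n=0}^\infty\subset[0,1]$, the following are equivalent: (i) $\sum_n t_n^2=\infty$; (ii) for every real Hilbert space $H$, every family $\{C_\alpha\}_{\alpha\in\Omega}$ ($|\Omega|\ge 2$) of closed convex subsets of $H$ with nonempty intersection $C=\bigcap_\alpha C_\alpha$, and every starting element $x_0\in H$, every sequence $\{x_n\}$ of remote projections onto $\{C_\alpha\}$ with weakness parameters $\{t_n\}$ has a partial weak limit (weak limit of some subsequence) belonging to $C$; (iii) for every real Hilbert space $H$, every dictionary $D\subset S(H)$ and every starting element $x_0\in H$, the residuals $\{x_n\}$ of every realization of the Weak Greedy Algorithm with weakness parameters $\{t_n\}$ have $0$ as a partial weak limit.
   Context: $P_\alpha$ is the metric projection onto $C_\alpha$. A sequence of remote projections with weakness parameters $t_n\in[0,1]$ starting at $x_0$: $x_{n+1}=P_{\alpha(n)}x_n$, where $\alpha(n)\in\Omega$ is any index with $\mathrm{dist}(x_n,C_{\alpha(n)})\ge t_n\sup_\alpha\mathrm{dist}(x_n,C_\alpha)$; if $t_n=1$ for some $n$ it is required that $\max_\alpha\mathrm{dist}(x,C_\alpha)$ is attained for every $x\in H$. $S(H)=\{s\in H:|s|=1\}$; a dictionary is a set $D\subset S(H)$ whose closed linear span is $H$. The Weak Greedy Algorithm with weakness parameters $\{t_n\}$ and starting element $x_0$ generates $x_{n+1}=x_n-\langle x_n,g_n\rangle g_n$, where $g_n\in D$ is any element with $|\langle x_n,g_n\rangle|\ge t_n\sup\{|\langle x_n,g\rangle|:g\in D\}$; if $t_n=1$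 for some $n$ it is required that $\max\{|\langle x,g\rangle|:g\in D\}$ is attained for every $x\in H$. *)

theory Defs
  imports "HOL-Analysis.Analysis"
begin

text \<open>Metric projection onto a set S (the nearest point of S to y; unique for
nonempty closed convex S in a real Hilbert space).\<close>
definition metric_proj :: "'a::real_inner set \<Rightarrow> 'a \<Rightarrow> 'a" where
  "metric_proj S y = (THE p. p \<in> S \<and> (\<forall>z\<in>S. dist y p \<le> dist y z))"

definition weakly_converges :: "(nat \<Rightarrow> 'a::real_inner) \<Rightarrow> 'a \<Rightarrow> bool" where
  "weakly_converges x y \<longleftrightarrow> (\<forall>z. (\<lambda>n. x n \<bullet> z) \<longlonglongrightarrow> y \<bullet> z)"

definition partial_weak_limit :: "(nat \<Rightarrow> 'a::real_inner) \<Rightarrow> 'a \<Rightarrow> bool" where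
  "partial_weak_limit x y \<longleftrightarrow> (\<exists>r. strict_mono r \<and> weakly_converges (x \<circ> r) y)"

definition remote_proj_seq ::
  "'i set \<Rightarrow> ('i \<Rightarrow> 'a::real_inner set) \<Rightarrow> (nat \<Rightarrow> real) \<Rightarrow> (nat \<Rightarrow> 'a) \<Rightarrow> bool" where
  "remote_proj_seq \<Omega> C t x \<longleftrightarrow>
     ((\<exists>n. t n = 1) \<longrightarrow>
        (\<forall>y. \<exists>\<beta>\<in>\<Omega>. infdist y (C \<beta>) = (SUP \<alpha>\<in>\<Omega>. infdist y (C \<alpha>)))) \<and>
     (\<forall>n. \<exists>\<beta>\<in>\<Omega>. infdist (x n) (C \<beta>) \<ge> t n * (SUP \<alpha>\<in>\<Omega>. infdist (x n) (C \<alpha>))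
                  \<and> x (Suc n) = metric_proj (C \<beta>) (x n))"

definition dictionary :: "'a::real_inner set \<Rightarrow> bool" where
  "dictionary D \<longleftrightarrow> (\<forall>g\<in>D. norm g = 1) \<and> closure (span D) = UNIV"

definition wga_seq :: "'a::real_inner set \<Rightarrow> (nat \<Rightarrow> real) \<Rightarrow> (nat \<Rightarrow> 'a) \<Rightarrow> bool" where
  "wga_seq D t x \<longleftrightarrow>
     ((\<exists>n. t n = 1) \<longrightarrow> (\<forall>y. \<exists>h\<in>D. \<bar>y \<bullet> h\<bar> = (SUP g\<in>D. \<bar>y \<bullet> g\<bar>))) \<and>
     (\<forall>n. \<exists>g\<in>D. \<bar>x n \<bullet> g\<bar> \<ge> t n * (SUP g'\<in>D. \<bar>x n \<bullet> g'\<bar>)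
                 \<and> x (Suc n) = x n - (x n \<bullet> g) *\<^sub>R g)"

end

theory Submission
  imports Defs "HOL-Library.Diagonal_Subsequence"
begin



lemma parallelogram_norm:
  fixes a b :: "'a::real_inner"
  shows "(norm (a - b))^2 + (norm (a + b))^2 = 2*(norm a)^2 + 2*(norm b)^2"
  by (simp add: power2_norm_eq_inner inner_add inner_diff inner_commute algebra_simps)

lemma proj_exists:
  fixes S :: "'a::{real_inner,complete_space} set"
  assumes S: "closed S" "convex S" "S \<noteq> {}"
  shows "\<exists>p\<in>S. \<forall>z\<in>S. dist y p \<le> dist y z"
proof -
  define d where "d = infdist y S"
  have d0: "0 \<le> d" by (simp add: d_def infdist_nonneg)
  have "\<forall>n. \<exists>s\<in>S. dist y s < d + 1/Suc n"
  proof
    fix n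
    have "Inf (dist y ` S) < d + 1/Suc n" using infdist_notempty[OF S(3)] d_def by simp
    then show "\<exists>s\<in>S. dist y s < d + 1/Suc n" using cInf_lessD[of "dist y ` S"] S(3) by auto
  qed
  then obtain s where sS: "\<And>n. s n \<in> S" and sd: "\<And>n. dist y (s n) < d + 1/Suc n" by metis
  have sge: "\<And>n. d \<le> dist y (s n)" using sS infdist_le d_def by auto
  have par: "(norm (s m - s n))^2 \<le> 2*(dist y (s m))^2 + 2*(dist y (s n))^2 - 4*d^2" for m n
  proof -
    have mid: "(1/2) *\<^sub>R s m + (1/2) *\<^sub>R s n \<in> S"
      using convexD[OF S(2) sS sS, of "1/2" "1/2"] by simp
    have "d \<le> dist y ((1/2) *\<^sub>R s m + (1/2) *\<^sub>R s n)" using infdist_le[OF mid] d_def by simp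
    also have "dist y ((1/2) *\<^sub>R s m + (1/2) *\<^sub>R s n) = norm ((y - s m) + (y - s n)) / 2"
    proof -
      have "(y - s m) + (y - s n) = 2 *\<^sub>R (y - ((1/2) *\<^sub>R s m + (1/2) *\<^sub>R s n))"
        by (simp add: algebra_simps scaleR_2)
      then show ?thesis by (simp add: dist_norm)
    qed
    finally have "2*d \<le> norm ((y - s m) + (y - s n))" by simp
    hence "(2*d)^2 \<le> (norm ((y - s m) + (y - s n)))^2" using d0 by (intro power_mono) auto
    moreover have "(norm ((y - s m) - (y - s n)))^2 + (norm ((y - s m) + (y - s n)))^2
        = 2*(norm (y - s m))^2 + 2*(norm (y - s n))^2" by (rule parallelogram_norm)
    moreover have "(y - s m) - (y - s n) = s n - s m" by simp
    ultimately show ?thesis by (simp add: dist_norm norm_minus_commute power_mult_distrib)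
  qed
  have bnd: "(dist y (s n))^2 \<le> d^2 + (2*d+1) * (1/Suc n)" for n
  proof -
    have a: "0 \<le> dist y (s n)" by simp
    have "(dist y (s n))^2 \<le> (d + 1/Suc n)^2" using sd[of n] a by (intro power_mono) auto
    also have "\<dots> = d^2 + 2*d*(1/Suc n) + (1/Suc n)*(1/Suc n)" by (simp add: power2_eq_square algebra_simps)
    also have "\<dots> \<le> d^2 + 2*d*(1/Suc n) + 1*(1/Suc n)"
      by (intro add_left_mono mult_right_mono) auto
    finally show ?thesis by (simp add: algebra_simps)
  qed
  have "Cauchy s"
  proof (rule metric_CauchyI)
    fix e :: real assume e: "e > 0"
    have "e^2/(8*d+4) > 0" using e d0 by auto
    then obtain N where N: "inverse (real (Suc N)) < e^2/(8*d+4)" using reals_Archimedean by blast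
    show "\<exists>M. \<forall>m\<ge>M. \<forall>n\<ge>M. dist (s m) (s n) < e"
    proof (intro exI allI impI)
      fix m n assume mn: "N \<le> m" "N \<le> n"
      have dm: "1/real (Suc m) \<le> 1/Suc N" using mn by (simp add: frac_le)
      have dn: "1/real (Suc n) \<le> 1/Suc N" using mn by (simp add: frac_le)
      have "(dist (s m) (s n))^2 \<le> 2*(dist y (s m))^2 + 2*(dist y (s n))^2 - 4*d^2"
        using par by (simp add: dist_norm)
      also have "\<dots> \<le> 2*(d^2 + (2*d+1) * (1/Suc m)) + 2*(d^2 + (2*d+1) * (1/Suc n)) - 4*d^2"
        using bnd[of m] bnd[of n] by (smt (verit))
      also have "\<dots> = (4*d+2) * (1/Suc m) + (4*d+2) * (1/Suc n)" by (simp add: algebra_simps)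
      also have "\<dots> \<le> (4*d+2) * (1/Suc N) + (4*d+2) * (1/Suc N)"
        using dm dn d0 by (intro add_mono mult_left_mono) auto
      also have "\<dots> < e^2" 
      proof -
        have "(8*d+4) * (1/Suc N) < (8*d+4) * (e^2/(8*d+4))"
          using mult_strict_left_mono[OF N[unfolded inverse_eq_divide], of "8*d+4"] d0 by simp
        also have "\<dots> = e^2" using d0 by simp
        finally show ?thesis by simp
      qed
      finally have "(dist (s m) (s n))^2 < e^2" .
      then show "dist (s m) (s n) < e" using e power2_less_imp_less by fastforce
    qed
  qed
  then obtain p where p: "s \<longlonglongrightarrow> p" using Cauchy_convergent convergent_def by blast
  have pS: "p \<in> S" using closed_sequential_limits[of S] S(1) sS p by blast
  have "(\<lambda>n. dist y (s n)) \<longlonglongrightarrow> dist y p" by (intro tendsto_intros p)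
  moreover have "(\<lambda>n. dist y (s n)) \<longlonglongrightarrow> d"
  proof (rule real_tendsto_sandwich[of "\<lambda>n. d" _ _ "\<lambda>n. d + 1/Suc n"])
    show "\<forall>\<^sub>F n in sequentially. d \<le> dist y (s n)" using sge by auto
    show "\<forall>\<^sub>F n in sequentially. dist y (s n) \<le> d + 1/Suc n" by (rule always_eventually) (metis sd less_imp_le)
    show "(\<lambda>n. d) \<longlonglongrightarrow> d" by simp
    have "(\<lambda>n. d + 1/real (Suc n)) \<longlonglongrightarrow> d + 0"
      by (intro tendsto_intros) (rule LIMSEQ_Suc[OF lim_const_over_n[of 1]])
    then show "(\<lambda>n. d + 1/real (Suc n)) \<longlonglongrightarrow> d" by simp
  qed
  ultimately have "dist y p = d" using LIMSEQ_unique by blast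
  then show ?thesis using pS infdist_le d_def by metis
qed

lemma nearest_var_ineq:
  fixes S :: "'a::real_inner set"
  assumes cvx: "convex S" and pS: "p \<in> S" and near: "\<forall>z\<in>S. dist y p \<le> dist y z" and zS: "z \<in> S"
  shows "(y - p) \<bullet> (z - p) \<le> 0"
proof (rule ccontr)
  define a where "a = (y - p) \<bullet> (z - p)"
  assume "\<not> (y - p) \<bullet> (z - p) \<le> 0"
  hence a0: "a > 0" by (simp add: a_def)
  hence zp: "z \<noteq> p" by (auto simp: a_def)
  define q where "q = (norm (z - p))^2"
  have q0: "q > 0" using zp by (simp add: q_def)
  define l where "l = min 1 (a / q)"
  have l0: "0 < l" "l \<le> 1" using a0 q0 by (auto simp: l_def)
  have lq: "l * q \<le> a" using q0 by (simp add: l_def min_def field_simps)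
  have wS: "(1 - l) *\<^sub>R p + l *\<^sub>R z \<in> S" using convexD[OF cvx pS zS, of "1-l" l] l0 by simp
  have eq: "y - ((1 - l) *\<^sub>R p + l *\<^sub>R z) = (y - p) - l *\<^sub>R (z - p)" by (simp add: algebra_simps)
  have "(dist y p)^2 \<le> (dist y ((1 - l) *\<^sub>R p + l *\<^sub>R z))^2"
    using near wS by (intro power_mono) auto
  also have "\<dots> = (norm (y - p))^2 - 2 * l * a + l^2 * q"
  proof -
    have "\<And>u v::'a. (norm (u - l *\<^sub>R v))^2 = (norm u)^2 - 2 * l * (u \<bullet> v) + l^2 * (norm v)^2"
      unfolding power2_norm_eq_inner by (simp add: inner_diff inner_commute algebra_simps power2_eq_square)
    then show ?thesis unfolding dist_norm eq a_def q_def by blast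
  qed
  finally have "2 * l * a \<le> l^2 * q" by (simp add: dist_norm)
  hence "l * (2 * a) \<le> l * (l * q)" by (simp add: power2_eq_square mult.assoc mult.left_commute)
  hence "2 * a \<le> l * q" using l0 mult_le_cancel_left_pos by blast
  thus False using lq a0 by simp
qed

lemma var_ineq_dist:
  fixes y p z :: "'a::real_inner"
  assumes "(y - p) \<bullet> (z - p) \<le> 0"
  shows "(norm (y - p))^2 + (norm (p - z))^2 \<le> (norm (y - z))^2"
proof -
  have uv: "\<And>u v::'a. (norm (u + v))^2 = (norm u)^2 + (norm v)^2 + 2 * (u \<bullet> v)"
    unfolding power2_norm_eq_inner by (simp add: inner_add inner_commute)
  have ng: "(y - p) \<bullet> (p - z) = - ((y - p) \<bullet> (z - p))"
    by (metis inner_minus_right minus_diff_eq)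
  have "(norm (y - z))^2 = (norm ((y - p) + (p - z)))^2" by simp
  also have "\<dots> = (norm (y - p))^2 + (norm (p - z))^2 + 2 * ((y - p) \<bullet> (p - z))" by (rule uv)
  finally have "(norm (y - z))^2 = (norm (y - p))^2 + (norm (p - z))^2 - 2 * ((y - p) \<bullet> (z - p))"
    using ng by simp
  thus ?thesis using assms by simp
qed

lemma metric_proj:
  fixes S :: "'a::{real_inner,complete_space} set"
  assumes S: "closed S" "convex S" "S \<noteq> {}"
  shows metric_proj_in: "metric_proj S y \<in> S"
    and metric_proj_near: "\<forall>z\<in>S. dist y (metric_proj S y) \<le> dist y z"
    and metric_proj_var: "\<forall>z\<in>S. (y - metric_proj S y) \<bullet> (z - metric_proj S y) \<le> 0"
proof -
  obtain p where pS: "p \<in> S" and near: "\<forall>z\<in>S. dist y p \<le> dist y z" using proj_exists[OF S] by blast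
  have uniq: "q = p" if qS: "q \<in> S" and nq: "\<forall>z\<in>S. dist y q \<le> dist y z" for q
  proof -
    have "(norm (y - p))^2 + (norm (p - q))^2 \<le> (norm (y - q))^2"
      by (rule var_ineq_dist[OF nearest_var_ineq[OF S(2) pS near qS]])
    moreover have "norm (y - q) \<le> norm (y - p)" using nq pS by (metis dist_norm)
    hence "(norm (y - q))^2 \<le> (norm (y - p))^2" by (intro power_mono) auto
    ultimately have "(norm (p - q))^2 \<le> 0" by linarith
    hence "(norm (p - q))^2 = 0" using zero_le_power2[of "norm (p - q)"] by linarith
    thus ?thesis by simp
  qed
  have eq: "metric_proj S y = p" unfolding metric_proj_def
  proof (rule the_equality)
    show "p \<in> S \<and> (\<forall>z\<in>S. dist y p \<le> dist y z)" using pS near by blast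
    show "\<And>q. q \<in> S \<and> (\<forall>z\<in>S. dist y q \<le> dist y z) \<Longrightarrow> q = p" using uniq by blast
  qed
  show "metric_proj S y \<in> S" using eq pS by simp
  show "\<forall>z\<in>S. dist y (metric_proj S y) \<le> dist y z" using eq near by simp
  show "\<forall>z\<in>S. (y - metric_proj S y) \<bullet> (z - metric_proj S y) \<le> 0"
    using eq nearest_var_ineq[OF S(2) pS near] by simp
qed

lemma metric_proj_infdist:
  fixes S :: "'a::{real_inner,complete_space} set"
  assumes S: "closed S" "convex S" "S \<noteq> {}"
  shows "infdist y S = dist y (metric_proj S y)"
proof (rule antisym)
  show "infdist y S \<le> dist y (metric_proj S y)" by (rule infdist_le[OF metric_proj_in[OF S]])
  show "dist y (metric_proj S y) \<le> infdist y S"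
    unfolding infdist_notempty[OF S(3)] using metric_proj_near[OF S]
    by (intro cINF_greatest S(3)) blast
qed

lemma metric_proj_fejer:
  fixes S :: "'a::{real_inner,complete_space} set"
  assumes S: "closed S" "convex S" "S \<noteq> {}" and zS: "z \<in> S"
  shows "(norm (y - metric_proj S y))^2 + (norm (metric_proj S y - z))^2 \<le> (norm (y - z))^2"
  using var_ineq_dist[OF metric_proj_var[OF S, rule_format, OF zS]] .

lemma metric_proj_subspace:
  fixes S :: "'a::{real_inner,complete_space} set"
  assumes S: "closed S" "subspace S" and zS: "z \<in> S"
  shows "(y - metric_proj S y) \<bullet> z = 0"
proof -
  have S': "closed S" "convex S" "S \<noteq> {}" using S subspace_imp_convex[OF S(2)] subspace_0[OF S(2)] by auto
  let ?p = "metric_proj S y"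
  have pS: "?p \<in> S" by (rule metric_proj_in[OF S'])
  have "(y - ?p) \<bullet> ((?p + z) - ?p) \<le> 0"
    using metric_proj_var[OF S', rule_format, OF subspace_add[OF S(2) pS zS]] .
  moreover have "(y - ?p) \<bullet> ((?p - z) - ?p) \<le> 0"
    using metric_proj_var[OF S', rule_format, OF subspace_diff[OF S(2) pS zS]] .
  ultimately show ?thesis by (simp add: inner_diff_right)
qed




lemma diag_inner:
  fixes a :: "nat \<Rightarrow> 'a::real_inner"
  assumes B: "\<And>n. norm (a n) \<le> B"
  shows "\<exists>r. strict_mono r \<and> (\<forall>m. convergent (\<lambda>k. a (r k) \<bullet> a m))"
proof -
  interpret D: subseqs "\<lambda>m s. convergent (\<lambda>k. a (s k) \<bullet> a m)"
  proof
    fix m and s :: "nat \<Rightarrow> nat" assume "strict_mono s"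
    have "bounded (range (\<lambda>k. a (s k) \<bullet> a m))"
    proof (rule boundedI)
      fix x assume "x \<in> range (\<lambda>k. a (s k) \<bullet> a m)"
      then obtain k where x: "x = a (s k) \<bullet> a m" by auto
      have "norm x \<le> norm (a (s k)) * norm (a m)" unfolding x real_norm_def by (rule Cauchy_Schwarz_ineq2)
      also have "\<dots> \<le> B * norm (a m)" using B by (intro mult_right_mono) auto
      finally show "norm x \<le> B * norm (a m)" .
    qed
    then obtain l r where "strict_mono r" "((\<lambda>k. a (s k) \<bullet> a m) \<circ> r) \<longlonglongrightarrow> l"
      using bounded_imp_convergent_subsequence by blast
    then show "\<exists>r'. strict_mono r' \<and> convergent (\<lambda>k. a ((s \<circ> r') k) \<bullet> a m)"
      by (auto simp: convergent_def o_def)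
  qed
  have "convergent (\<lambda>k. a (D.diagseq k) \<bullet> a m)" for m
  proof -
    have "convergent (\<lambda>k. a ((D.diagseq \<circ> (+) (Suc m)) k) \<bullet> a m)"
    proof (rule D.diagseq_holds)
      fix r s n assume "strict_mono (r::nat\<Rightarrow>nat)" "convergent (\<lambda>k. a (s k) \<bullet> a n)"
      then show "convergent (\<lambda>k. a ((s \<circ> r) k) \<bullet> a n)"
        using convergent_subseq_convergent[of "\<lambda>k. a (s k) \<bullet> a n" r] by (simp add: o_def)
    qed
    then obtain l where "(\<lambda>k. a (D.diagseq (k + Suc m)) \<bullet> a m) \<longlonglongrightarrow> l"
      by (auto simp: convergent_def o_def add.commute)
    then have "(\<lambda>k. a (D.diagseq k) \<bullet> a m) \<longlonglongrightarrow> l" by (rule LIMSEQ_offset)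
    then show ?thesis by (auto simp: convergent_def)
  qed
  then show ?thesis using D.subseq_diagseq by blast
qed

lemma weak_compact:
  fixes a :: "nat \<Rightarrow> 'a::{real_inner,complete_space}"
  assumes B: "\<And>n. norm (a n) \<le> B"
  shows "\<exists>r y. strict_mono r \<and> weakly_converges (a \<circ> r) y"
proof -
  obtain r where r: "strict_mono r" and conv: "\<And>m. convergent (\<lambda>k. a (r k) \<bullet> a m)"
    using diag_inner[of a B] B by blast
  define b where "b = a \<circ> r"
  have bB: "norm (b k) \<le> B" for k using B by (simp add: b_def)
  have B0: "0 \<le> B" using B[of 0] by (meson norm_ge_zero order_trans)
  define Z where "Z = {z. convergent (\<lambda>k. b k \<bullet> z)}"
  have rangeZ: "a m \<in> Z" for m using conv by (simp add: Z_def b_def)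
  have subZ: "subspace Z"
    unfolding subspace_def Z_def
  proof (intro conjI ballI allI)
    show "0 \<in> {z. convergent (\<lambda>k. b k \<bullet> z)}" by (simp add: convergent_const)
    fix x y assume "x \<in> {z. convergent (\<lambda>k. b k \<bullet> z)}" "y \<in> {z. convergent (\<lambda>k. b k \<bullet> z)}"
    then show "x + y \<in> {z. convergent (\<lambda>k. b k \<bullet> z)}" by (simp add: inner_add_right convergent_add)
  next
    fix c x assume "x \<in> {z. convergent (\<lambda>k. b k \<bullet> z)}"
    then show "c *\<^sub>R x \<in> {z. convergent (\<lambda>k. b k \<bullet> z)}" using convergent_mult[OF convergent_const[of c], of "\<lambda>k. b k \<bullet> x"] by simp
  qed
  have closedZ: "closed Z"
    unfolding closed_sequential_limits
  proof (intro allI impI)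
    fix zs z assume h: "(\<forall>n. zs n \<in> Z) \<and> zs \<longlonglongrightarrow> z"
    have "Cauchy (\<lambda>k. b k \<bullet> z)"
    proof (rule metric_CauchyI)
      fix e :: real assume e: "0 < e"
      have "\<forall>\<^sub>F j in sequentially. dist (zs j) z < e / (3 * (B + 1))"
        using h e B0 by (intro tendstoD) auto
      then obtain N where N: "\<forall>j\<ge>N. dist (zs j) z < e / (3 * (B + 1))" unfolding eventually_sequentially by blast
      obtain j where j: "norm (zs j - z) < e / (3 * (B + 1))" using N[rule_format, OF order_refl] by (auto simp: dist_norm)
      have "Cauchy (\<lambda>k. b k \<bullet> zs j)" using h by (simp add: Z_def Cauchy_convergent_iff)
      then obtain M where M: "\<And>m n. m \<ge> M \<Longrightarrow> n \<ge> M \<Longrightarrow> dist (b m \<bullet> zs j) (b n \<bullet> zs j) < e / 3"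
        using e by (metis metric_CauchyD zero_less_divide_iff zero_less_numeral)
      have bnd: "\<bar>b k \<bullet> z - b k \<bullet> zs j\<bar> \<le> e / 3" for k
      proof -
        have "\<bar>b k \<bullet> z - b k \<bullet> zs j\<bar> = \<bar>b k \<bullet> (z - zs j)\<bar>" by (simp add: inner_diff_right)
        also have "\<dots> \<le> norm (b k) * norm (z - zs j)" by (rule Cauchy_Schwarz_ineq2)
        also have "\<dots> \<le> (B + 1) * (e / (3 * (B + 1)))"
          using bB[of k] j B0 by (intro mult_mono) (auto simp: norm_minus_commute)
        also have "\<dots> = e / 3" using B0 by (simp add: field_simps)
        finally show ?thesis .
      qed
      show "\<exists>M. \<forall>m\<ge>M. \<forall>n\<ge>M. dist (b m \<bullet> z) (b n \<bullet> z) < e"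
      proof (intro exI allI impI)
        fix m n assume "M \<le> m" "M \<le> n"
        then have "dist (b m \<bullet> zs j) (b n \<bullet> zs j) < e / 3" by (rule M)
        then show "dist (b m \<bullet> z) (b n \<bullet> z) < e" using bnd[of m] bnd[of n] unfolding dist_real_def by linarith
      qed
    qed
    then show "z \<in> Z" by (simp add: Z_def Cauchy_convergent_iff)
  qed
  have allZ: "z \<in> Z" for z
  proof -
    have ZZ: "closed Z" "convex Z" "Z \<noteq> {}" using closedZ subspace_imp_convex[OF subZ] subspace_0[OF subZ] by auto
    define q where "q = metric_proj Z z"
    have qZ: "q \<in> Z" unfolding q_def by (rule metric_proj_in[OF ZZ])
    have "b k \<bullet> (z - q) = 0" for k
      using metric_proj_subspace[OF closedZ subZ rangeZ[of "r k"], of z] by (simp add: b_def q_def inner_commute)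
    then have "b k \<bullet> z = b k \<bullet> q" for k by (simp add: inner_diff_right)
    then show ?thesis using qZ by (simp add: Z_def)
  qed
  define f where "f z = lim (\<lambda>k. b k \<bullet> z)" for z
  have flim: "(\<lambda>k. b k \<bullet> z) \<longlonglongrightarrow> f z" for z
    using allZ[of z] by (simp add: Z_def f_def convergent_LIMSEQ_iff)
  have fadd: "f (u + v) = f u + f v" for u v
    using flim[of "u + v"] tendsto_add[OF flim[of u] flim[of v]] LIMSEQ_unique by (simp add: inner_add_right) blast
  have fscale: "f (c *\<^sub>R u) = c * f u" for c u
    using flim[of "c *\<^sub>R u"] tendsto_mult[OF tendsto_const[of c] flim[of u]] LIMSEQ_unique by simp blast
  have fdiff: "f (u - v) = f u - f v" for u v
    using fadd[of "u - v" v] by simp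
  have fbnd: "\<bar>f u\<bar> \<le> B * norm u" for u
  proof (rule LIMSEQ_le_const2)
    show "(\<lambda>k. \<bar>b k \<bullet> u\<bar>) \<longlonglongrightarrow> \<bar>f u\<bar>" by (intro tendsto_intros flim)
    show "\<exists>N. \<forall>n\<ge>N. \<bar>b n \<bullet> u\<bar> \<le> B * norm u"
    proof (intro exI allI impI)
      fix n :: nat
      have "\<bar>b n \<bullet> u\<bar> \<le> norm (b n) * norm u" by (rule Cauchy_Schwarz_ineq2)
      also have "\<dots> \<le> B * norm u" using bB[of n] by (intro mult_right_mono) auto
      finally show "\<bar>b n \<bullet> u\<bar> \<le> B * norm u" .
    qed
  qed
  obtain y where y: "\<And>v. f v = y \<bullet> v"
  proof (cases "\<forall>v. f v = 0")
    case True then show ?thesis using that[of 0] by simp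
  next
    case False
    then obtain u where fu: "f u \<noteq> 0" by blast
    define K where "K = {v. f v = 0}"
    have f0: "f 0 = 0" using fscale[of 0 0] by simp
    have subK: "subspace K" unfolding subspace_def K_def
    proof (intro conjI ballI allI)
      show "0 \<in> {v. f v = 0}" using f0 by simp
      show "x + y \<in> {v. f v = 0}" if "x \<in> {v. f v = 0}" "y \<in> {v. f v = 0}" for x y
        using that fadd[of x y] by simp
      show "c *\<^sub>R x \<in> {v. f v = 0}" if "x \<in> {v. f v = 0}" for c x
        using that fscale[of c x] by simp
    qed
    have closedK: "closed K"
      unfolding closed_sequential_limits
    proof (intro allI impI)
      fix zs z assume h: "(\<forall>n. zs n \<in> K) \<and> zs \<longlonglongrightarrow> z"
      have "\<bar>f z\<bar> \<le> 0"
      proof (rule LIMSEQ_le_const)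
        show "(\<lambda>j. B * norm (z - zs j)) \<longlonglongrightarrow> 0"
        proof -
          have "(\<lambda>j. B * norm (z - zs j)) \<longlonglongrightarrow> B * norm (z - z)" using h by (intro tendsto_intros) auto
          then show ?thesis by simp
        qed
        show "\<exists>N. \<forall>n\<ge>N. \<bar>f z\<bar> \<le> B * norm (z - zs n)"
        proof (intro exI allI impI)
          fix n :: nat
          have "f (zs n) = 0" using h by (simp add: K_def)
          then have "f z = f (z - zs n)" by (simp add: fdiff)
          then show "\<bar>f z\<bar> \<le> B * norm (z - zs n)" using fbnd[of "z - zs n"] by simp
        qed
      qed
      then show "z \<in> K" by (simp add: K_def)
    qed
    have KK: "closed K" "convex K" "K \<noteq> {}" using closedK subspace_imp_convex[OF subK] subspace_0[OF subK] by auto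
    define w where "w = u - metric_proj K u"
    have wK: "w \<bullet> v = 0" if "v \<in> K" for v
      using metric_proj_subspace[OF closedK subK that, of u] by (simp add: w_def)
    have fw: "f w = f u" using metric_proj_in[OF KK, of u] by (simp add: w_def fdiff K_def)
    then have fw0: "f w \<noteq> 0" using fu by simp
    have w0: "w \<noteq> 0" using fw0 f0 by auto
    show ?thesis
    proof (rule that[of "(f w / (w \<bullet> w)) *\<^sub>R w"])
      fix v
      have "v - (f v / f w) *\<^sub>R w \<in> K" using fw0 by (simp add: K_def fdiff fscale)
      then have "w \<bullet> (v - (f v / f w) *\<^sub>R w) = 0" by (rule wK)
      then have "w \<bullet> v = (f v / f w) * (w \<bullet> w)" by (simp add: inner_diff_right)
      then show "f v = (f w / (w \<bullet> w)) *\<^sub>R w \<bullet> v" using fw0 w0 by simp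
    qed
  qed
  have "weakly_converges b y"
    unfolding weakly_converges_def using flim y by simp
  then show ?thesis using r b_def by blast
qed



lemma weak_closed:
  fixes S :: "'a::{real_inner,complete_space} set"
  assumes S: "closed S" "convex S" "S \<noteq> {}"
    and wc: "weakly_converges a w" and d: "(\<lambda>k. infdist (a k) S) \<longlonglongrightarrow> 0"
  shows "w \<in> S"
proof -
  define p where "p = metric_proj S w"
  have pS: "p \<in> S" unfolding p_def by (rule metric_proj_in[OF S])
  have var: "(w - p) \<bullet> (s - p) \<le> 0" if "s \<in> S" for s
    using metric_proj_var[OF S] that by (simp add: p_def)
  have le: "(w - p) \<bullet> (a k - p) \<le> norm (w - p) * infdist (a k) S" for k
  proof -
    define q where "q = metric_proj S (a k)"
    have qS: "q \<in> S" unfolding q_def by (rule metric_proj_in[OF S])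
    have dq: "norm (a k - q) = infdist (a k) S" using metric_proj_infdist[OF S, of "a k"] by (simp add: q_def dist_norm)
    have "(w - p) \<bullet> (a k - p) = (w - p) \<bullet> (q - p) + (w - p) \<bullet> (a k - q)"
      by (simp add: inner_diff_right)
    also have "\<dots> \<le> 0 + norm (w - p) * norm (a k - q)"
      using var[OF qS] by (intro add_mono) (auto intro: order_trans[OF abs_ge_self Cauchy_Schwarz_ineq2])
    finally show ?thesis using dq by simp
  qed
  have lim1: "(\<lambda>k. (w - p) \<bullet> (a k - p)) \<longlonglongrightarrow> (w - p) \<bullet> (w - p)"
  proof -
    have "(\<lambda>k. a k \<bullet> (w - p)) \<longlonglongrightarrow> w \<bullet> (w - p)" using wc by (simp add: weakly_converges_def)
    then have "(\<lambda>k. a k \<bullet> (w - p) - p \<bullet> (w - p)) \<longlonglongrightarrow> w \<bullet> (w - p) - p \<bullet> (w - p)"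
      by (rule tendsto_diff[OF _ tendsto_const])
    then show ?thesis by (simp add: inner_diff inner_commute)
  qed
  have lim2: "(\<lambda>k. norm (w - p) * infdist (a k) S) \<longlonglongrightarrow> norm (w - p) * 0"
    by (intro tendsto_intros d)
  have "(w - p) \<bullet> (w - p) \<le> norm (w - p) * 0"
    using lim1 lim2 le by (intro LIMSEQ_le[OF lim1 lim2]) auto
  then have "w - p = 0" using inner_ge_zero[of "w - p"] by (simp add: order_antisym)
  then show ?thesis using pS by simp
qed

fun pick :: "(nat \<Rightarrow> real) \<Rightarrow> nat \<Rightarrow> nat" where
  "pick d 0 = (SOME n. d n < 1)"
| "pick d (Suc k) = (SOME n. n > pick d k \<and> d n < 1 / real (Suc (Suc k)))"

lemma small_subseq:
  assumes h: "\<forall>e>0. \<forall>M. \<exists>n\<ge>M. d n < e"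
  shows "strict_mono (pick d) \<and> (\<forall>k. d (pick d k) < 1 / real (Suc k))"
proof -
  have A: "d (pick d 0) < 1" using someI_ex[of "\<lambda>n. d n < 1"] h[rule_format, of 1 0] by auto
  have B: "pick d k < pick d (Suc k) \<and> d (pick d (Suc k)) < 1 / real (Suc (Suc k))" for k
  proof -
    have "\<exists>n. n > pick d k \<and> d n < 1 / real (Suc (Suc k))"
      using h[rule_format, of "1 / real (Suc (Suc k))" "Suc (pick d k)"] by (metis Suc_le_lessD of_nat_0_less_iff zero_less_Suc zero_less_divide_1_iff)
    from someI_ex[OF this] show ?thesis by simp
  qed
  have "strict_mono (pick d)" using B by (simp add: strict_mono_Suc_iff)
  moreover have "d (pick d k) < 1 / real (Suc k)" for k
    using A B by (cases k) auto
  ultimately show ?thesis by blast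
qed

lemma not_summable_small:
  fixes t d :: "nat \<Rightarrow> real"
  assumes ns: "\<not> summable (\<lambda>n. (t n)^2)" and d0: "\<And>n. 0 \<le> d n"
    and s: "summable (\<lambda>n. (t n * d n)^2)"
  shows "\<forall>e>0. \<forall>M. \<exists>n\<ge>M. d n < e"
proof (rule ccontr)
  assume "\<not> ?thesis"
  then obtain e M where e: "e > 0" and dM: "\<And>n. n \<ge> M \<Longrightarrow> e \<le> d n" by (auto simp: not_less)
  have "summable (\<lambda>n. (t n)^2)"
  proof (rule summable_comparison_test')
    show "summable (\<lambda>n. (t n * d n)^2 / e^2)" using s by (rule summable_divide)
    fix n assume "M \<le> n"
    then have "e^2 \<le> (d n)^2" using dM[of n] e by (intro power_mono) auto
    then have "(t n)^2 * e^2 \<le> (t n)^2 * (d n)^2" by (intro mult_left_mono) auto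
    then show "norm ((t n)^2) \<le> (t n * d n)^2 / e^2" using e by (simp add: field_simps power_mult_distrib)
  qed
  then show False using ns by simp
qed

lemma tendsto_inv_suc: "(\<lambda>k. 1 / real (Suc k)) \<longlonglongrightarrow> 0"
  using LIMSEQ_Suc[OF lim_const_over_n[of 1]] by simp

lemma small_tendsto:
  fixes d :: "nat \<Rightarrow> real"
  assumes "\<And>k. 0 \<le> d k" "\<And>k. d k \<le> 1 / real (Suc k)"
  shows "d \<longlonglongrightarrow> 0"
  by (rule real_tendsto_sandwich[of "\<lambda>k. 0" _ _ "\<lambda>k. 1 / real (Suc k)"])
     (use assms tendsto_inv_suc in auto)

lemma inv_suc_mono: "strict_mono (s::nat\<Rightarrow>nat) \<Longrightarrow> 1 / real (Suc (s k)) \<le> 1 / real (Suc k)"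
  using seq_suble[of s k] by (simp add: frac_le)




lemma remote_part:
  fixes x :: "nat \<Rightarrow> 'a::{real_inner,complete_space}" and C :: "'i \<Rightarrow> 'a set"
  assumes t: "\<forall>n. 0 \<le> t n \<and> t n \<le> 1" and ns: "\<not> summable (\<lambda>n. (t n)^2)"
    and \<Omega>: "\<exists>\<alpha>\<in>\<Omega>. \<exists>\<beta>\<in>\<Omega>. \<alpha> \<noteq> \<beta>" and cc: "\<forall>\<alpha>\<in>\<Omega>. closed (C \<alpha>) \<and> convex (C \<alpha>)"
    and ne: "(\<Inter>\<alpha>\<in>\<Omega>. C \<alpha>) \<noteq> {}" and rp: "remote_proj_seq \<Omega> C t x"
  shows "\<exists>y\<in>(\<Inter>\<alpha>\<in>\<Omega>. C \<alpha>). partial_weak_limit x y"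
proof -
  obtain c where c: "c \<in> (\<Inter>\<alpha>\<in>\<Omega>. C \<alpha>)" using ne by blast
  obtain \<alpha>0 where a0: "\<alpha>0 \<in> \<Omega>" using \<Omega> by blast
  have CC: "closed (C \<alpha>)" "convex (C \<alpha>)" "C \<alpha> \<noteq> {}" if "\<alpha> \<in> \<Omega>" for \<alpha>
    using cc c that by auto
  define D where "D n = (SUP \<alpha>\<in>\<Omega>. infdist (x n) (C \<alpha>))" for n
  have "\<forall>n. \<exists>\<beta>. \<beta> \<in> \<Omega> \<and> infdist (x n) (C \<beta>) \<ge> t n * D n \<and> x (Suc n) = metric_proj (C \<beta>) (x n)"
    using rp unfolding remote_proj_seq_def D_def by blast
  then obtain \<beta> where b\<Omega>: "\<And>n. \<beta> n \<in> \<Omega>" and bD: "\<And>n. infdist (x n) (C (\<beta> n)) \<ge> t n * D n"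
      and xs: "\<And>n. x (Suc n) = metric_proj (C (\<beta> n)) (x n)" by metis
  have bdd: "bdd_above ((\<lambda>\<alpha>. infdist (x n) (C \<alpha>)) ` \<Omega>)" for n
  proof (rule bdd_aboveI2)
    fix \<alpha> assume "\<alpha> \<in> \<Omega>" then show "infdist (x n) (C \<alpha>) \<le> dist (x n) c"
      using c by (intro infdist_le) auto
  qed
  have D0: "0 \<le> D n" for n
    unfolding D_def using bdd a0 by (rule cSUP_upper2) (simp add: infdist_nonneg)
  have Dge: "infdist (x n) (C \<alpha>) \<le> D n" if "\<alpha> \<in> \<Omega>" for n \<alpha>
    unfolding D_def using that bdd by (rule cSUP_upper)
  have fej: "(norm (x n - x (Suc n)))^2 + (norm (x (Suc n) - c))^2 \<le> (norm (x n - c))^2" for n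
  proof -
    have "c \<in> C (\<beta> n)" using c b\<Omega>[of n] by blast
    from metric_proj_fejer[OF CC[OF b\<Omega>[of n]] this, of "x n"] show ?thesis
      unfolding xs[of n, symmetric] by (simp add: norm_minus_commute)
  qed
  have step: "norm (x n - x (Suc n)) = infdist (x n) (C (\<beta> n))" for n
    using metric_proj_infdist[OF CC[OF b\<Omega>[of n]], of "x n"] xs[of n] by (simp add: dist_norm)
  have tele: "(\<Sum>n<N. (norm (x n - x (Suc n)))^2) + (norm (x N - c))^2 \<le> (norm (x 0 - c))^2" for N
  proof (induction N)
    case 0 then show ?case by simp
  next
    case (Suc N) then show ?case using fej[of N] by simp
  qed
  have sum1: "summable (\<lambda>n. (norm (x n - x (Suc n)))^2)"
  proof (rule summableI_nonneg_bounded)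
    show "\<And>n. 0 \<le> (norm (x n - x (Suc n)))^2" by simp
    show "(\<Sum>n<N. (norm (x n - x (Suc n)))^2) \<le> (norm (x 0 - c))^2" for N
      using tele[of N] zero_le_power2[of "norm (x N - c)"] by linarith
  qed
  have sum2: "summable (\<lambda>n. (t n * D n)^2)"
  proof (rule summable_comparison_test'[OF sum1])
    fix n :: nat
    have "0 \<le> t n * D n" using t D0 by simp
    then have "(t n * D n)^2 \<le> (norm (x n - x (Suc n)))^2"
      using bD[of n] step[of n] by (intro power_mono) auto
    then show "norm ((t n * D n)^2) \<le> (norm (x n - x (Suc n)))^2" by simp
  qed
  have small: "\<forall>e>0. \<forall>M. \<exists>n\<ge>M. D n < e"
    by (rule not_summable_small[OF ns D0 sum2])
  define r where "r = pick D"
  have r: "strict_mono r" "\<And>k. D (r k) < 1 / real (Suc k)"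
    using small_subseq[OF small] by (auto simp: r_def)
  have nb: "norm (x n - c) \<le> norm (x 0 - c)" for n
  proof -
    have "(norm (x n - c))^2 \<le> (norm (x 0 - c))^2" using tele[of n] sum_nonneg[of "{..<n}" "\<lambda>n. (norm (x n - x (Suc n)))^2", OF zero_le_power2] by linarith
    then show ?thesis using power2_le_imp_le norm_ge_zero by blast
  qed
  have xb: "norm ((x \<circ> r) n) \<le> norm c + norm (x 0 - c)" for n
  proof -
    have "norm (x (r n)) \<le> norm c + norm (x (r n) - c)" by (metis add.commute diff_add_cancel norm_triangle_ineq)
    then show ?thesis using nb[of "r n"] by simp
  qed
  obtain s y where s: "strict_mono s" and wc: "weakly_converges ((x \<circ> r) \<circ> s) y"
    using weak_compact[of "x \<circ> r" "norm c + norm (x 0 - c)"] xb by blast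
  have "y \<in> C \<alpha>" if a: "\<alpha> \<in> \<Omega>" for \<alpha>
  proof (rule weak_closed[OF CC[OF a] wc])
    show "(\<lambda>k. infdist (((x \<circ> r) \<circ> s) k) (C \<alpha>)) \<longlonglongrightarrow> 0"
    proof (rule small_tendsto)
      fix k
      show "0 \<le> infdist (((x \<circ> r) \<circ> s) k) (C \<alpha>)" by (rule infdist_nonneg)
      have "infdist (((x \<circ> r) \<circ> s) k) (C \<alpha>) \<le> D (r (s k))" using Dge[OF a] by simp
      also have "\<dots> \<le> 1 / real (Suc (s k))" using r(2)[of "s k"] by simp
      also have "\<dots> \<le> 1 / real (Suc k)" by (rule inv_suc_mono[OF s])
      finally show "infdist (((x \<circ> r) \<circ> s) k) (C \<alpha>) \<le> 1 / real (Suc k)" .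
    qed
  qed
  moreover have "partial_weak_limit x y"
    unfolding partial_weak_limit_def using wc r(1) s
    by (intro exI[of _ "r \<circ> s"]) (simp add: o_assoc strict_mono_o)
  ultimately show ?thesis by blast
qed




lemma wga_part:
  fixes x :: "nat \<Rightarrow> 'a::{real_inner,complete_space}"
  assumes t: "\<forall>n. 0 \<le> t n \<and> t n \<le> 1" and ns: "\<not> summable (\<lambda>n. (t n)^2)"
    and dic: "dictionary D" and wg: "wga_seq D t x"
  shows "partial_weak_limit x 0"
proof -
  define s where "s n = (SUP g\<in>D. \<bar>x n \<bullet> g\<bar>)" for n
  have "\<forall>n. \<exists>g. g \<in> D \<and> \<bar>x n \<bullet> g\<bar> \<ge> t n * s n \<and> x (Suc n) = x n - (x n \<bullet> g) *\<^sub>R g"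
    using wg unfolding wga_seq_def s_def by blast
  then obtain g where gD: "\<And>n. g n \<in> D" and gs: "\<And>n. \<bar>x n \<bullet> g n\<bar> \<ge> t n * s n"
      and xs: "\<And>n. x (Suc n) = x n - (x n \<bullet> g n) *\<^sub>R g n" by metis
  have unit: "norm h = 1" if "h \<in> D" for h using dic that by (simp add: dictionary_def)
  have bdd: "bdd_above ((\<lambda>h. \<bar>x n \<bullet> h\<bar>) ` D)" for n
  proof (rule bdd_aboveI2)
    fix h assume "h \<in> D" then show "\<bar>x n \<bullet> h\<bar> \<le> norm (x n)"
      using Cauchy_Schwarz_ineq2[of "x n" h] unit by simp
  qed
  have s0: "0 \<le> s n" for n
    unfolding s_def using bdd gD by (rule cSUP_upper2) simp
  have sge: "\<bar>x n \<bullet> h\<bar> \<le> s n" if "h \<in> D" for n h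
    unfolding s_def using that bdd by (rule cSUP_upper)
  have nstep: "(norm (x (Suc n)))^2 + (x n \<bullet> g n)^2 = (norm (x n))^2" for n
  proof -
    have gg: "g n \<bullet> g n = 1" using unit[OF gD[of n]] by (simp add: dot_square_norm)
    show ?thesis unfolding xs[of n] power2_norm_eq_inner
      by (simp add: inner_diff inner_commute gg algebra_simps power2_eq_square)
  qed
  have tele: "(\<Sum>n<N. (x n \<bullet> g n)^2) + (norm (x N))^2 = (norm (x 0))^2" for N
  proof (induction N)
    case 0 then show ?case by simp
  next
    case (Suc N) then show ?case using nstep[of N] by simp
  qed
  have sum1: "summable (\<lambda>n. (x n \<bullet> g n)^2)"
  proof (rule summableI_nonneg_bounded)
    show "\<And>n. 0 \<le> (x n \<bullet> g n)^2" by simp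
    show "(\<Sum>n<N. (x n \<bullet> g n)^2) \<le> (norm (x 0))^2" for N
      using tele[of N] zero_le_power2[of "norm (x N)"] by linarith
  qed
  have sum2: "summable (\<lambda>n. (t n * s n)^2)"
  proof (rule summable_comparison_test'[OF sum1])
    fix n :: nat
    have "0 \<le> t n * s n" using t s0 by simp
    then have "(t n * s n)^2 \<le> \<bar>x n \<bullet> g n\<bar>^2"
      using gs[of n] by (intro power_mono) auto
    then show "norm ((t n * s n)^2) \<le> (x n \<bullet> g n)^2" by simp
  qed
  have small: "\<forall>e>0. \<forall>M. \<exists>n\<ge>M. s n < e"
    by (rule not_summable_small[OF ns s0 sum2])
  define r where "r = pick s"
  have r: "strict_mono r" "\<And>k. s (r k) < 1 / real (Suc k)"
    using small_subseq[OF small] by (auto simp: r_def)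
  have nb: "norm (x n) \<le> norm (x 0)" for n
  proof -
    have "(norm (x n))^2 \<le> (norm (x 0))^2"
      using tele[of n] sum_nonneg[of "{..<n}" "\<lambda>n. (x n \<bullet> g n)^2", OF zero_le_power2] by linarith
    then show ?thesis using power2_le_imp_le norm_ge_zero by blast
  qed
  obtain q y where q: "strict_mono q" and wc: "weakly_converges ((x \<circ> r) \<circ> q) y"
    using weak_compact[of "x \<circ> r" "norm (x 0)"] nb by auto
  have yD: "y \<bullet> h = 0" if h: "h \<in> D" for h
  proof -
    have l1: "(\<lambda>k. ((x \<circ> r) \<circ> q) k \<bullet> h) \<longlonglongrightarrow> y \<bullet> h" using wc by (simp add: weakly_converges_def)
    have "(\<lambda>k. \<bar>((x \<circ> r) \<circ> q) k \<bullet> h\<bar>) \<longlonglongrightarrow> 0"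
    proof (rule small_tendsto)
      fix k
      show "0 \<le> \<bar>((x \<circ> r) \<circ> q) k \<bullet> h\<bar>" by simp
      have "\<bar>((x \<circ> r) \<circ> q) k \<bullet> h\<bar> \<le> s (r (q k))" using sge[OF h] by simp
      also have "\<dots> \<le> 1 / real (Suc (q k))" using r(2)[of "q k"] by simp
      also have "\<dots> \<le> 1 / real (Suc k)" by (rule inv_suc_mono[OF q])
      finally show "\<bar>((x \<circ> r) \<circ> q) k \<bullet> h\<bar> \<le> 1 / real (Suc k)" .
    qed
    then have "(\<lambda>k. ((x \<circ> r) \<circ> q) k \<bullet> h) \<longlonglongrightarrow> 0" by (simp add: tendsto_rabs_zero_iff)
    then show ?thesis using l1 LIMSEQ_unique by blast
  qed
  have "closure (span D) \<subseteq> {z. y \<bullet> z = 0}"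
  proof (rule closure_minimal)
    show "span D \<subseteq> {z. y \<bullet> z = 0}"
    proof (rule span_minimal)
      show "D \<subseteq> {z. y \<bullet> z = 0}" using yD by blast
      show "subspace {z. y \<bullet> z = 0}" by (simp add: subspace_def inner_add_right)
    qed
    show "closed {z. y \<bullet> z = 0}" by (rule closed_hyperplane)
  qed
  then have "y \<bullet> y = 0" using dic unfolding dictionary_def by blast
  then have "y = 0" by simp
  then show ?thesis
    unfolding partial_weak_limit_def using wc r(1) q
    by (intro exI[of _ "r \<circ> q"]) (simp add: o_assoc strict_mono_o)
qed




definition orthonormal_set :: "'a::real_inner set \<Rightarrow> bool" where
  "orthonormal_set L \<longleftrightarrow> (\<forall>u\<in>L. norm u = 1) \<and> (\<forall>u\<in>L. \<forall>v\<in>L. u \<noteq> v \<longrightarrow> u \<bullet> v = 0)"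

lemma exists_orth_unit:
  fixes L :: "'a::real_inner set"
  assumes fin: "finite L" and on: "orthonormal_set L" and ns: "span L \<noteq> UNIV"
  shows "\<exists>w. norm w = 1 \<and> (\<forall>u\<in>L. u \<bullet> w = 0)"
proof -
  obtain v where v: "v \<notin> span L" using ns by blast
  define w0 where "w0 = v - (\<Sum>u\<in>L. (v \<bullet> u) *\<^sub>R u)"
  have orth: "u0 \<bullet> w0 = 0" if u0: "u0 \<in> L" for u0
  proof -
    have "u0 \<bullet> (\<Sum>u\<in>L. (v \<bullet> u) *\<^sub>R u) = (\<Sum>u\<in>L. (v \<bullet> u) * (u0 \<bullet> u))"
      by (simp add: inner_sum_right)
    also have "\<dots> = (\<Sum>u\<in>L. if u = u0 then v \<bullet> u0 else 0)"
    proof (rule sum.cong[OF refl])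
      fix u assume uL: "u \<in> L"
      show "(v \<bullet> u) * (u0 \<bullet> u) = (if u = u0 then v \<bullet> u0 else 0)"
      proof (cases "u = u0")
        case True
        have "u0 \<bullet> u0 = 1" using on u0 by (simp add: orthonormal_set_def dot_square_norm)
        then show ?thesis using True by simp
      next
        case False then show ?thesis using on u0 uL by (auto simp: orthonormal_set_def)
      qed
    qed
    also have "\<dots> = v \<bullet> u0" using fin u0 by (simp add: sum.delta')
    finally show ?thesis by (simp add: w0_def inner_diff_right inner_commute)
  qed
  have w00: "w0 \<noteq> 0"
  proof
    assume "w0 = 0"
    then have "v = (\<Sum>u\<in>L. (v \<bullet> u) *\<^sub>R u)" by (simp add: w0_def)
    moreover have "(\<Sum>u\<in>L. (v \<bullet> u) *\<^sub>R u) \<in> span L"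
      by (intro span_sum span_scale span_base)
    ultimately show False using v by simp
  qed
  show ?thesis
    by (rule exI[of _ "w0 /\<^sub>R norm w0"]) (use w00 orth in simp)
qed

definition next_vec :: "'a::real_inner list \<Rightarrow> 'a" where
  "next_vec L = (SOME u. norm u = 1 \<and> (\<forall>v\<in>set L. v \<bullet> u = 0))"

fun olist :: "nat \<Rightarrow> 'a::real_inner list" where
  "olist 0 = []"
| "olist (Suc n) = olist n @ [next_vec (olist n)]"

lemma olist_props:
  assumes inf: "\<forall>B::'a::real_inner set. finite B \<longrightarrow> span B \<noteq> UNIV"
  shows "orthonormal_set (set (olist n :: 'a list)) \<and> set (olist n :: 'a list) = (\<lambda>i. next_vec (olist i :: 'a list)) ` {..<n}"
proof (induction n)
  case 0 then show ?case by (simp add: orthonormal_set_def)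
next
  case (Suc n)
  let ?L = "olist n :: 'a list"
  have "\<exists>w. norm w = 1 \<and> (\<forall>u\<in>set ?L. u \<bullet> w = 0)"
    using exists_orth_unit[of "set ?L"] Suc inf by auto
  then have nv: "norm (next_vec ?L) = 1 \<and> (\<forall>u\<in>set ?L. u \<bullet> next_vec ?L = 0)"
    unfolding next_vec_def by (rule someI_ex)
  have "orthonormal_set (set (olist (Suc n) :: 'a list))"
    using Suc nv unfolding orthonormal_set_def by (auto simp: inner_commute)
  moreover have "set (olist (Suc n) :: 'a list) = (\<lambda>i. next_vec (olist i)) ` {..<Suc n}"
  proof -
    have IH2: "set ?L = (\<lambda>i. next_vec (olist i :: 'a list)) ` {..<n}" using Suc.IH by (rule conjunct2)
    have "set (olist (Suc n) :: 'a list) = insert (next_vec ?L) (set ?L)" by simp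
    also have "\<dots> = insert (next_vec ?L) ((\<lambda>i. next_vec (olist i)) ` {..<n})" by (simp only: IH2)
    also have "\<dots> = (\<lambda>i. next_vec (olist i)) ` {..<Suc n}" by (simp add: lessThan_Suc)
    finally show ?thesis .
  qed
  ultimately show ?case by blast
qed

lemma next_vec_props:
  assumes inf: "\<forall>B::'a::real_inner set. finite B \<longrightarrow> span B \<noteq> UNIV"
  shows "norm (next_vec (olist n :: 'a list)) = 1 \<and> (\<forall>u\<in>set (olist n :: 'a list). u \<bullet> next_vec (olist n) = 0)"
proof -
  have "\<exists>w. norm w = 1 \<and> (\<forall>u\<in>set (olist n :: 'a list). u \<bullet> w = 0)"
    using exists_orth_unit[of "set (olist n :: 'a list)"] olist_props[OF inf, of n] inf by auto
  then show ?thesis unfolding next_vec_def by (rule someI_ex)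
qed

lemma orthonormal_seq:
  assumes inf: "\<forall>B::'a::real_inner set. finite B \<longrightarrow> span B \<noteq> UNIV"
  shows "\<exists>e::nat \<Rightarrow> 'a. \<forall>i j. e i \<bullet> e j = (if i = j then 1 else 0)"
proof -
  define e :: "nat \<Rightarrow> 'a" where "e i = next_vec (olist i)" for i
  have st: "set (olist n :: 'a list) = e ` {..<n}" for n
    using olist_props[OF inf] by (auto simp: e_def)
  have unit: "norm (e i) = 1" for i using next_vec_props[OF inf, of i] by (simp add: e_def)
  have orth: "e i \<bullet> e j = 0" if "i < j" for i j
  proof -
    have "e i \<in> set (olist j)" using st[of j] that by auto
    then show ?thesis using next_vec_props[OF inf, of j] by (simp add: e_def)
  qed
  have "e i \<bullet> e j = (if i = j then 1 else 0)" for i j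
  proof (cases i j rule: linorder_cases)
    case less then show ?thesis using orth by simp
  next
    case equal then show ?thesis using unit[of i] by (simp add: dot_square_norm)
  next
    case greater then show ?thesis using orth[of j i] by (simp add: inner_commute)
  qed
  then show ?thesis by blast
qed




lemma proj_unique_var:
  fixes S :: "'a::{real_inner,complete_space} set"
  assumes S: "closed S" "convex S" "S \<noteq> {}" and pS: "p \<in> S"
    and var: "\<forall>z\<in>S. (y - p) \<bullet> (z - p) \<le> 0"
  shows "metric_proj S y = p"
proof -
  let ?q = "metric_proj S y"
  have qS: "?q \<in> S" by (rule metric_proj_in[OF S])
  have a: "(norm (y - ?q))^2 + (norm (?q - p))^2 \<le> (norm (y - p))^2"
    by (rule metric_proj_fejer[OF S pS])
  have b: "(norm (y - p))^2 + (norm (p - ?q))^2 \<le> (norm (y - ?q))^2"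
    by (rule var_ineq_dist) (use var qS in blast)
  have "(norm (p - ?q))^2 = 0" using a b zero_le_power2[of "norm (p - ?q)"]
    by (simp only: norm_minus_commute[of ?q p])
  then show ?thesis by simp
qed

lemma hyperplane_props:
  fixes g :: "'a::{real_inner,complete_space}"
  assumes g: "norm g = 1"
  shows "closed {z. g \<bullet> z = 0}" "convex {z. g \<bullet> z = 0}" "{z. g \<bullet> z = 0} \<noteq> {}"
    and "metric_proj {z. g \<bullet> z = 0} y = y - (y \<bullet> g) *\<^sub>R g"
    and "infdist y {z. g \<bullet> z = 0} = \<bar>y \<bullet> g\<bar>"
proof -
  show S: "closed {z. g \<bullet> z = 0}" "convex {z. g \<bullet> z = 0}" "{z. g \<bullet> z = 0} \<noteq> {}"
    by (auto intro: closed_hyperplane convex_hyperplane exI[of _ 0])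
  have gg: "g \<bullet> g = 1" using g by (simp add: dot_square_norm)
  let ?p = "y - (y \<bullet> g) *\<^sub>R g"
  have pS: "?p \<in> {z. g \<bullet> z = 0}" using gg by (simp add: inner_diff_right inner_commute)
  have "\<forall>z\<in>{z. g \<bullet> z = 0}. (y - ?p) \<bullet> (z - ?p) \<le> 0"
    using pS by (simp add: inner_diff_right)
  then show eq: "metric_proj {z. g \<bullet> z = 0} y = ?p" by (rule proj_unique_var[OF S pS])
  show "infdist y {z. g \<bullet> z = 0} = \<bar>y \<bullet> g\<bar>"
    using metric_proj_infdist[OF S, of y] eq g by (simp add: dist_norm)
qed

lemma wga_to_remote:
  fixes x :: "nat \<Rightarrow> 'a::{real_inner,complete_space}"
  assumes dic: "dictionary D" and wg: "wga_seq D t x"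
  shows "remote_proj_seq ((\<lambda>g. {z. g \<bullet> z = 0}) ` D) (\<lambda>A. A) t x"
proof -
  have unit: "norm g = 1" if "g \<in> D" for g using dic that by (simp add: dictionary_def)
  have sup: "(SUP \<alpha>\<in>(\<lambda>g. {z. g \<bullet> z = 0}) ` D. infdist y \<alpha>) = (SUP g\<in>D. \<bar>y \<bullet> g\<bar>)" for y
  proof -
    have "(SUP \<alpha>\<in>(\<lambda>g. {z. g \<bullet> z = 0}) ` D. infdist y \<alpha>) = (SUP g\<in>D. infdist y {z. g \<bullet> z = 0})"
      by (simp add: image_image)
    also have "\<dots> = (SUP g\<in>D. \<bar>y \<bullet> g\<bar>)"
      by (rule SUP_cong[OF refl]) (simp add: hyperplane_props(5)[OF unit])
    finally show ?thesis .
  qed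
  show ?thesis unfolding remote_proj_seq_def
  proof (intro conjI impI allI)
    fix y assume "\<exists>n. t n = 1"
    then obtain h where h: "h \<in> D" "\<bar>y \<bullet> h\<bar> = (SUP g\<in>D. \<bar>y \<bullet> g\<bar>)"
      using wg unfolding wga_seq_def by blast
    show "\<exists>\<beta>\<in>(\<lambda>g. {z. g \<bullet> z = 0}) ` D. infdist y \<beta> = (SUP \<alpha>\<in>(\<lambda>g. {z. g \<bullet> z = 0}) ` D. infdist y \<alpha>)"
      using h hyperplane_props(5)[OF unit[OF h(1)], of y] sup[of y] by auto
  next
    fix n
    obtain g where g: "g \<in> D" "\<bar>x n \<bullet> g\<bar> \<ge> t n * (SUP g'\<in>D. \<bar>x n \<bullet> g'\<bar>)"
      "x (Suc n) = x n - (x n \<bullet> g) *\<^sub>R g"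
      using wg unfolding wga_seq_def by blast
    show "\<exists>\<beta>\<in>(\<lambda>g. {z. g \<bullet> z = 0}) ` D. t n * (SUP \<alpha>\<in>(\<lambda>g. {z. g \<bullet> z = 0}) ` D. infdist (x n) \<alpha>) \<le> infdist (x n) \<beta>
          \<and> x (Suc n) = metric_proj \<beta> (x n)"
    proof (rule bexI[of _ "{z. g \<bullet> z = 0}"])
      show "{z. g \<bullet> z = 0} \<in> (\<lambda>g. {z. g \<bullet> z = 0}) ` D" using g(1) by blast
      show "t n * (SUP \<alpha>\<in>(\<lambda>g. {z. g \<bullet> z = 0}) ` D. infdist (x n) \<alpha>) \<le> infdist (x n) {z. g \<bullet> z = 0}
          \<and> x (Suc n) = metric_proj {z. g \<bullet> z = 0} (x n)"
        using g hyperplane_props(4,5)[OF unit[OF g(1)], of "x n"] sup[of "x n"] by simp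
    qed
  qed
qed




primrec xseq :: "(nat \<Rightarrow> 'a::real_inner) \<Rightarrow> (nat \<Rightarrow> real) \<Rightarrow> nat \<Rightarrow> nat \<Rightarrow> 'a" where
  "xseq e t N 0 = e 0 + (\<Sum>i\<in>{1..N}. e i)"
| "xseq e t N (Suc n) = (if n < N then xseq e t N n - e (Suc n)
     else (1 - (t n)^2) *\<^sub>R xseq e t N n + (t n * sqrt (1 - (t n)^2) * norm (xseq e t N n)) *\<^sub>R e (Suc n))"

lemma construction:
  fixes e :: "nat \<Rightarrow> 'a::{real_inner,complete_space}"
  assumes e: "\<forall>i j. e i \<bullet> e j = (if i = j then 1 else 0)"
    and t: "\<forall>n. 0 \<le> t n \<and> t n \<le> 1"
    and Nt: "\<forall>n. (\<Sum>k\<in>{N..<n}. (t k)^2) \<le> 1/2"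
  shows "\<exists>(D::'a set) x. dictionary D \<and> wga_seq D t x \<and> \<not> partial_weak_limit x 0
           \<and> (\<exists>g1\<in>D. \<exists>g2\<in>D. g1 \<bullet> g2 = 0 \<and> g2 \<bullet> g2 = 1)"
proof -
  define V0 where "V0 = {v. \<forall>i\<in>{1..N}. e i \<bullet> v = 0}"
  define D where "D = e ` {1..N} \<union> {v\<in>V0. norm v = 1}"
  define x where "x = xseq e t N"
  define P0 where "P0 y = y - (\<Sum>i\<in>{1..N}. (y \<bullet> e i) *\<^sub>R e i)" for y
  have ee: "e i \<bullet> e j = (if i = j then 1 else 0)" for i j using e by blast
  have eunit: "norm (e i) = 1" for i using ee[of i i] by (simp add: norm_eq_sqrt_inner)
  have P0V: "P0 y \<in> V0" for y
  proof -
    have "e j \<bullet> P0 y = 0" if j: "j \<in> {1..N}" for j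
    proof -
      have "e j \<bullet> (\<Sum>i\<in>{1..N}. (y \<bullet> e i) *\<^sub>R e i) = (\<Sum>i\<in>{1..N}. (y \<bullet> e i) * (e j \<bullet> e i))"
        by (simp add: inner_sum_right)
      also have "\<dots> = (\<Sum>i\<in>{1..N}. if i = j then y \<bullet> e j else 0)" by (rule sum.cong) (auto simp: ee)
      also have "\<dots> = y \<bullet> e j" using j by simp
      finally show ?thesis by (simp add: P0_def inner_diff_right inner_commute)
    qed
    then show ?thesis by (simp add: V0_def)
  qed
  have P0inner: "y \<bullet> v = P0 y \<bullet> v" if v: "v \<in> V0" for y v
  proof -
    have "(\<Sum>i\<in>{1..N}. (y \<bullet> e i) *\<^sub>R e i) \<bullet> v = 0"
      using v by (simp add: inner_sum_left V0_def)
    then show ?thesis by (simp add: P0_def inner_diff_left)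
  qed
  have eV: "e m \<in> V0" if "m = 0 \<or> m > N" for m using that by (auto simp: V0_def ee)
  have e0D: "e 0 \<in> D" using eV[of 0] eunit by (simp add: D_def)
  have Dne: "D \<noteq> {}" using e0D by blast
  have Dunit: "norm h = 1" if "h \<in> D" for h using that eunit by (auto simp: D_def)
  have V0scale: "c *\<^sub>R v \<in> V0" if "v \<in> V0" for c v using that by (simp add: V0_def)
  have bddD: "bdd_above ((\<lambda>h. \<bar>y \<bullet> h\<bar>) ` D)" for y
  proof (rule bdd_aboveI2)
    fix h assume "h \<in> D" then show "\<bar>y \<bullet> h\<bar> \<le> norm y"
      using Cauchy_Schwarz_ineq2[of y h] Dunit by simp
  qed
  have supnorm: "(SUP h\<in>D. \<bar>y \<bullet> h\<bar>) \<le> norm y" for y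
  proof (rule cSUP_least[OF Dne])
    fix h assume "h \<in> D" then show "\<bar>y \<bullet> h\<bar> \<le> norm y"
      using Cauchy_Schwarz_ineq2[of y h] Dunit by simp
  qed
  have F1: "x n = e 0 + (\<Sum>i\<in>{Suc n..N}. e i)" if "n \<le> N" for n
    using that
  proof (induction n)
    case 0 then show ?case by (simp add: x_def)
  next
    case (Suc n)
    then have "n < N" by simp
    then have "x (Suc n) = x n - e (Suc n)" by (simp add: x_def)
    also have "\<dots> = e 0 + (\<Sum>i\<in>{Suc n..N}. e i) - e (Suc n)" using Suc by simp
    also have "(\<Sum>i\<in>{Suc n..N}. e i) = e (Suc n) + (\<Sum>i\<in>{Suc (Suc n)..N}. e i)"
      using \<open>n < N\<close> by (simp add: sum.atLeast_Suc_atMost)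
    finally show ?case by simp
  qed
  have F1e: "x n \<bullet> e j = (if j = 0 then 1 else 0) + (if Suc n \<le> j \<and> j \<le> N then 1 else 0)"
    if "n \<le> N" for n j
  proof -
    have "(\<Sum>i\<in>{Suc n..N}. e i) \<bullet> e j = (\<Sum>i\<in>{Suc n..N}. if i = j then 1 else 0)"
      by (simp add: inner_sum_left ee)
    also have "\<dots> = (if Suc n \<le> j \<and> j \<le> N then 1 else 0)" by (simp add: sum.delta')
    finally show ?thesis using F1[OF that] by (simp add: inner_add_left ee)
  qed
  have F1v: "x n \<bullet> h = e 0 \<bullet> h" if "n \<le> N" "h \<in> V0" for n h
  proof -
    have "(\<Sum>i\<in>{Suc n..N}. e i) \<bullet> h = 0"
      using that(2) by (simp add: inner_sum_left V0_def)
    then show ?thesis using F1[OF that(1)] by (simp add: inner_add_left)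
  qed
  have F2: "x (N + d) \<in> V0 \<and> (\<forall>m>N + d. e m \<bullet> x (N + d) = 0)
      \<and> e 0 \<bullet> x (N + d) \<ge> 1 - (\<Sum>k\<in>{N..<N + d}. (t k)^2)" for d
  proof (induction d)
    case 0
    have "x N = e 0" using F1[of N] by simp
    then show ?case using eV[of 0] by (simp add: ee)
  next
    case (Suc d)
    let ?n = "N + d"
    define a where "a = 1 - (t ?n)^2"
    define b where "b = t ?n * sqrt (1 - (t ?n)^2) * norm (x ?n)"
    have xs: "x (N + Suc d) = a *\<^sub>R x ?n + b *\<^sub>R e (Suc ?n)"
      by (simp add: x_def a_def b_def)
    have a0: "0 \<le> a" using t[rule_format, of ?n] power_le_one[of "t ?n" 2] by (simp add: a_def)
    have xV: "x ?n \<in> V0" and xm: "\<forall>m>?n. e m \<bullet> x ?n = 0" using Suc.IH by blast+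
    have "e i \<bullet> x (N + Suc d) = 0" if i: "i \<in> {1..N}" for i
    proof -
      have "e i \<bullet> x ?n = 0" using xV i by (simp add: V0_def)
      moreover have "e i \<bullet> e (Suc ?n) = 0" using i ee[of i "Suc ?n"] by simp
      ultimately show ?thesis unfolding xs by (simp add: inner_add_right)
    qed
    then have "x (N + Suc d) \<in> V0" by (simp add: V0_def)
    moreover have "\<forall>m>N + Suc d. e m \<bullet> x (N + Suc d) = 0"
    proof (intro allI impI)
      fix m assume m: "m > N + Suc d"
      have "e m \<bullet> x ?n = 0" using xm m by simp
      moreover have "e m \<bullet> e (Suc ?n) = 0" using m ee[of m "Suc ?n"] by simp
      ultimately show "e m \<bullet> x (N + Suc d) = 0" unfolding xs by (simp add: inner_add_right)
    qed
    moreover have "e 0 \<bullet> x (N + Suc d) \<ge> 1 - (\<Sum>k\<in>{N..<N + Suc d}. (t k)^2)"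
    proof -
      let ?S = "\<Sum>k\<in>{N..<?n}. (t k)^2"
      have S0: "0 \<le> ?S" by (simp add: sum_nonneg)
      have "e 0 \<bullet> e (Suc ?n) = 0" using ee[of 0 "Suc ?n"] by simp
      then have "e 0 \<bullet> x (N + Suc d) = a * (e 0 \<bullet> x ?n)" unfolding xs by (simp add: inner_add_right)
      also have "\<dots> \<ge> a * (1 - ?S)" using Suc.IH a0 by (intro mult_left_mono) auto
      finally have "e 0 \<bullet> x (N + Suc d) \<ge> a * (1 - ?S)" .
      moreover have "a * (1 - ?S) \<ge> 1 - (?S + (t ?n)^2)"
        using S0 by (simp add: a_def algebra_simps)
      moreover have "(\<Sum>k\<in>{N..<N + Suc d}. (t k)^2) = ?S + (t ?n)^2" by simp
      ultimately show ?thesis by linarith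
    qed
    ultimately show ?case by blast
  qed
  have F2': "x n \<in> V0" "\<And>m. m > n \<Longrightarrow> e m \<bullet> x n = 0" "e 0 \<bullet> x n \<ge> 1/2" if "N \<le> n" for n
  proof -
    obtain d where d: "n = N + d" using le_Suc_ex[of N n] \<open>N \<le> n\<close> by blast
    have F2d: "x (N + d) \<in> V0" "\<forall>m>N + d. e m \<bullet> x (N + d) = 0"
      "e 0 \<bullet> x (N + d) \<ge> 1 - (\<Sum>k\<in>{N..<N + d}. (t k)^2)" using F2[of d] by blast+
    show "x n \<in> V0" unfolding d by (rule F2d(1))
    show "e m \<bullet> x n = 0" if "m > n" for m using F2d(2) that unfolding d by blast
    show "e 0 \<bullet> x n \<ge> 1/2" using F2d(3) Nt[rule_format, of "N + d"] unfolding d by linarith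
  qed
  have xnz: "x n \<noteq> 0" if "N \<le> n" for n
  proof
    assume "x n = 0"
    then show False using F2'(3)[OF that] by simp
  qed
  have dic: "dictionary D"
  proof -
    have "y \<in> span D" for y
    proof -
      have s1: "(\<Sum>i\<in>{1..N}. (y \<bullet> e i) *\<^sub>R e i) \<in> span D"
        by (intro span_sum span_scale span_base) (auto simp: D_def)
      have s2: "P0 y \<in> span D"
      proof (cases "P0 y = 0")
        case True then show ?thesis by (simp add: span_zero)
      next
        case False
        have "P0 y /\<^sub>R norm (P0 y) \<in> D" using False P0V[of y] V0scale by (simp add: D_def)
        then have "norm (P0 y) *\<^sub>R (P0 y /\<^sub>R norm (P0 y)) \<in> span D" by (intro span_scale span_base)
        then show ?thesis using False by simp
      qed
      have "y = P0 y + (\<Sum>i\<in>{1..N}. (y \<bullet> e i) *\<^sub>R e i)" by (simp add: P0_def)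
      then show ?thesis using span_add[OF s2 s1] by simp
    qed
    then have "span D = UNIV" by blast
    then show ?thesis using Dunit by (simp add: dictionary_def)
  qed
  have attain: "\<exists>h\<in>D. \<bar>y \<bullet> h\<bar> = (SUP g\<in>D. \<bar>y \<bullet> g\<bar>)" for y
  proof -
    define u where "u = (if P0 y = 0 then e 0 else P0 y /\<^sub>R norm (P0 y))"
    have uD: "u \<in> D" using e0D P0V[of y] V0scale by (auto simp: u_def D_def)
    have uV: "u \<in> V0" using uD eV[of 0] P0V[of y] V0scale by (auto simp: u_def)
    have yu: "\<bar>y \<bullet> u\<bar> = norm (P0 y)"
    proof (cases "P0 y = 0")
      case True then show ?thesis using P0inner[OF uV, of y] by (simp add: u_def)
    next
      case False
      have "y \<bullet> u = P0 y \<bullet> u" by (rule P0inner[OF uV])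
      also have "\<dots> = norm (P0 y)" using False by (simp add: u_def dot_square_norm power2_eq_square)
      finally show ?thesis by simp
    qed
    define Cand where "Cand = insert u (e ` {1..N})"
    have finC: "finite Cand" by (simp add: Cand_def)
    have CD: "Cand \<subseteq> D" using uD by (auto simp: Cand_def D_def)
    define m where "m = Max ((\<lambda>h. \<bar>y \<bullet> h\<bar>) ` Cand)"
    have "m \<in> (\<lambda>h. \<bar>y \<bullet> h\<bar>) ` Cand" unfolding m_def using finC by (intro Max_in) (auto simp: Cand_def)
    then obtain h where hC: "h \<in> Cand" and hm: "\<bar>y \<bullet> h\<bar> = m" by blast
    have geC: "\<bar>y \<bullet> g\<bar> \<le> m" if "g \<in> Cand" for g unfolding m_def using finC that by (intro Max_ge) auto
    have geD: "\<bar>y \<bullet> g\<bar> \<le> m" if g: "g \<in> D" for g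
    proof (cases "g \<in> e ` {1..N}")
      case True then show ?thesis using geC by (simp add: Cand_def)
    next
      case False
      then have gV: "g \<in> V0" "norm g = 1" using g by (auto simp: D_def)
      have "\<bar>y \<bullet> g\<bar> = \<bar>P0 y \<bullet> g\<bar>" using P0inner[OF gV(1)] by simp
      also have "\<dots> \<le> norm (P0 y) * norm g" by (rule Cauchy_Schwarz_ineq2)
      also have "\<dots> = \<bar>y \<bullet> u\<bar>" using yu gV by simp
      also have "\<dots> \<le> m" using geC by (simp add: Cand_def)
      finally show ?thesis .
    qed
    have "(SUP g\<in>D. \<bar>y \<bullet> g\<bar>) = m"
      by (rule cSup_eq_maximum) (use hC CD hm geD in auto)
    then show ?thesis using hC CD hm by auto
  qed
  have steps: "\<exists>g\<in>D. \<bar>x n \<bullet> g\<bar> \<ge> t n * (SUP g'\<in>D. \<bar>x n \<bullet> g'\<bar>) \<and> x (Suc n) = x n - (x n \<bullet> g) *\<^sub>R g" for n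
  proof (cases "n < N")
    case True
    have gD: "e (Suc n) \<in> D" using True by (simp add: D_def)
    have one: "x n \<bullet> e (Suc n) = 1" using F1e[of n "Suc n"] True by simp
    have "(SUP g'\<in>D. \<bar>x n \<bullet> g'\<bar>) \<le> 1"
    proof (rule cSUP_least[OF Dne])
      fix h assume h: "h \<in> D"
      show "\<bar>x n \<bullet> h\<bar> \<le> 1"
      proof (cases "h \<in> e ` {1..N}")
        case True
        then obtain i where "h = e i" "i \<in> {1..N}" by blast
        then show ?thesis using F1e[of n i] \<open>n < N\<close> by auto
      next
        case False
        then have hV: "h \<in> V0" "norm h = 1" using h by (auto simp: D_def)
        have "\<bar>x n \<bullet> h\<bar> = \<bar>e 0 \<bullet> h\<bar>" using F1v[of n h] True hV by simp
        also have "\<dots> \<le> norm (e 0) * norm h" by (rule Cauchy_Schwarz_ineq2)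
        finally show ?thesis using hV eunit by simp
      qed
    qed
    then have "t n * (SUP g'\<in>D. \<bar>x n \<bullet> g'\<bar>) \<le> t n * 1" using t by (intro mult_left_mono) auto
    then have le: "t n * (SUP g'\<in>D. \<bar>x n \<bullet> g'\<bar>) \<le> \<bar>x n \<bullet> e (Suc n)\<bar>" using one t[rule_format, of n] by simp
    have "x (Suc n) = x n - (x n \<bullet> e (Suc n)) *\<^sub>R e (Suc n)" using True one by (simp add: x_def)
    then show ?thesis using gD le by blast
  next
    case False
    then have Nn: "N \<le> n" by simp
    define \<nu> where "\<nu> = norm (x n)"
    have \<nu>0: "\<nu> > 0" using xnz[OF Nn] by (simp add: \<nu>_def)
    define c where "c = sqrt (1 - (t n)^2)"
    have c2: "c^2 = 1 - (t n)^2" using t[rule_format, of n] power_le_one[of "t n" 2] by (simp add: c_def)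
    define g where "g = (t n / \<nu>) *\<^sub>R x n - c *\<^sub>R e (Suc n)"
    have xe: "x n \<bullet> e (Suc n) = 0" using F2'(2)[OF Nn, of "Suc n"] by (simp add: inner_commute)
    have xx: "x n \<bullet> x n = \<nu>^2" by (simp add: \<nu>_def dot_square_norm)
    have gV: "g \<in> V0"
    proof -
      have "x n \<in> V0" using F2'(1)[OF Nn] .
      moreover have "e (Suc n) \<in> V0" using eV[of "Suc n"] Nn by simp
      ultimately show ?thesis by (simp add: g_def V0_def inner_diff_right)
    qed
    have gg: "g \<bullet> g = 1"
    proof -
      have "g \<bullet> g = (t n / \<nu>)^2 * (x n \<bullet> x n) - 2 * (t n / \<nu>) * c * (x n \<bullet> e (Suc n)) + c^2 * (e (Suc n) \<bullet> e (Suc n))"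
        unfolding g_def by (simp add: inner_diff inner_commute power2_eq_square algebra_simps)
      also have "\<dots> = (t n)^2 + c^2" using \<nu>0 xe xx ee[of "Suc n" "Suc n"] by (simp add: power_divide)
      finally show ?thesis using c2 by simp
    qed
    have gD: "g \<in> D" using gV gg by (simp add: D_def norm_eq_sqrt_inner)
    have xg: "x n \<bullet> g = t n * \<nu>"
      unfolding g_def using xe xx \<nu>0 by (simp add: inner_diff_right power2_eq_square)
    have le: "t n * (SUP g'\<in>D. \<bar>x n \<bullet> g'\<bar>) \<le> \<bar>x n \<bullet> g\<bar>"
      using mult_left_mono[OF supnorm[of "x n"], of "t n"] t xg \<nu>0 by (simp add: \<nu>_def)
    have "x (Suc n) = (1 - (t n)^2) *\<^sub>R x n + (t n * c * \<nu>) *\<^sub>R e (Suc n)"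
      using False by (simp add: x_def c_def \<nu>_def)
    also have "\<dots> = x n - (x n \<bullet> g) *\<^sub>R g"
    proof -
      have tt: "(t n * \<nu>) * (t n / \<nu>) = (t n)^2" using \<nu>0 by (simp add: power2_eq_square)
      have "x n - (x n \<bullet> g) *\<^sub>R g = x n - (t n * \<nu>) *\<^sub>R g" by (simp add: xg)
      also have "\<dots> = x n - ((t n * \<nu>) * (t n / \<nu>)) *\<^sub>R x n + (t n * \<nu> * c) *\<^sub>R e (Suc n)"
        by (simp add: g_def scaleR_diff_right)
      also have "\<dots> = (1 - (t n)^2) *\<^sub>R x n + (t n * c * \<nu>) *\<^sub>R e (Suc n)"
        unfolding tt by (simp add: algebra_simps)
      finally show ?thesis by simp
    qed
    finally show ?thesis using gD le by blast
  qed
  have wga: "wga_seq D t x" unfolding wga_seq_def using attain steps by blast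
  have npwl: "\<not> partial_weak_limit x 0"
  proof
    assume "partial_weak_limit x 0"
    then obtain r where r: "strict_mono r" and wc: "weakly_converges (x \<circ> r) 0"
      unfolding partial_weak_limit_def by blast
    have lim: "(\<lambda>k. x (r k) \<bullet> e 0) \<longlonglongrightarrow> 0" using wc by (simp add: weakly_converges_def)
    have "1/2 \<le> (0::real)"
    proof (rule LIMSEQ_le_const[OF lim])
      show "\<exists>M. \<forall>k\<ge>M. 1/2 \<le> x (r k) \<bullet> e 0"
      proof (intro exI allI impI)
        fix k assume "N \<le> k"
        then have "N \<le> r k" using seq_suble[OF r, of k] by simp
        then show "1/2 \<le> x (r k) \<bullet> e 0" using F2'(3) by (simp add: inner_commute)
      qed
    qed
    then show False by simp
  qed
  have two: "\<exists>g1\<in>D. \<exists>g2\<in>D. g1 \<bullet> g2 = 0 \<and> g2 \<bullet> g2 = 1"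
  proof (intro bexI conjI)
    show "e 0 \<bullet> e (Suc N) = 0" "e (Suc N) \<bullet> e (Suc N) = 1" using ee by simp_all
    show "e 0 \<in> D" by (rule e0D)
    show "e (Suc N) \<in> D" using eV[of "Suc N"] eunit by (simp add: D_def)
  qed
  show ?thesis using dic wga npwl two by blast
qed




lemma dict_orth_zero:
  fixes y :: "'a::real_inner"
  assumes dic: "dictionary D" and orth: "\<forall>g\<in>D. g \<bullet> y = 0"
  shows "y = 0"
proof -
  have "closure (span D) \<subseteq> {z. y \<bullet> z = 0}"
  proof (rule closure_minimal)
    show "span D \<subseteq> {z. y \<bullet> z = 0}"
    proof (rule span_minimal)
      show "D \<subseteq> {z. y \<bullet> z = 0}" using orth by (auto simp: inner_commute)
      show "subspace {z. y \<bullet> z = 0}" by (simp add: subspace_def inner_add_right)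
    qed
    show "closed {z. y \<bullet> z = 0}" by (rule closed_hyperplane)
  qed
  then have "y \<bullet> y = 0" using dic unfolding dictionary_def by blast
  then show "y = 0" by simp
qed

theorem theorem3:
  fixes t :: "nat \<Rightarrow> real"
  assumes t_range: "\<forall>n. 0 \<le> t n \<and> t n \<le> 1"
  shows
    "(\<not> summable (\<lambda>n. (t n)\<^sup>2) \<longrightarrow>
        (\<forall>(\<Omega>::'i set) (C::'i \<Rightarrow> 'a::{real_inner,complete_space} set) x.
            (\<exists>\<alpha>\<in>\<Omega>. \<exists>\<beta>\<in>\<Omega>. \<alpha> \<noteq> \<beta>) \<and> (\<forall>\<alpha>\<in>\<Omega>. closed (C \<alpha>) \<and> convex (C \<alpha>))
            \<and> (\<Inter>\<alpha>\<in>\<Omega>. C \<alpha>) \<noteq> {} \<and> remote_proj_seq \<Omega> C t x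
            \<longrightarrow> (\<exists>y\<in>(\<Inter>\<alpha>\<in>\<Omega>. C \<alpha>). partial_weak_limit x y))
      \<and> (\<forall>(D::'a set) x. dictionary D \<and> wga_seq D t x \<longrightarrow> partial_weak_limit x 0))
     \<and>
     ((\<forall>B::'b::{real_inner,complete_space} set. finite B \<longrightarrow> span B \<noteq> UNIV) \<longrightarrow>
        ((\<forall>(\<Omega>::'b set set) (C::'b set \<Rightarrow> 'b set) x.
            (\<exists>\<alpha>\<in>\<Omega>. \<exists>\<beta>\<in>\<Omega>. \<alpha> \<noteq> \<beta>) \<and> (\<forall>\<alpha>\<in>\<Omega>. closed (C \<alpha>) \<and> convex (C \<alpha>))
            \<and> (\<Inter>\<alpha>\<in>\<Omega>. C \<alpha>) \<noteq> {} \<and> remote_proj_seq \<Omega> C t x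
            \<longrightarrow> (\<exists>y\<in>(\<Inter>\<alpha>\<in>\<Omega>. C \<alpha>). partial_weak_limit x y))
          \<longrightarrow> \<not> summable (\<lambda>n. (t n)\<^sup>2))
      \<and> ((\<forall>(D::'b set) x. dictionary D \<and> wga_seq D t x \<longrightarrow> partial_weak_limit x 0)
          \<longrightarrow> \<not> summable (\<lambda>n. (t n)\<^sup>2)))"
proof (intro conjI impI allI)
  fix \<Omega> :: "'i set" and C :: "'i \<Rightarrow> 'a set" and x
  assume "\<not> summable (\<lambda>n. (t n)\<^sup>2)"
    "(\<exists>\<alpha>\<in>\<Omega>. \<exists>\<beta>\<in>\<Omega>. \<alpha> \<noteq> \<beta>) \<and> (\<forall>\<alpha>\<in>\<Omega>. closed (C \<alpha>) \<and> convex (C \<alpha>))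
            \<and> (\<Inter>\<alpha>\<in>\<Omega>. C \<alpha>) \<noteq> {} \<and> remote_proj_seq \<Omega> C t x"
  then show "\<exists>y\<in>(\<Inter>\<alpha>\<in>\<Omega>. C \<alpha>). partial_weak_limit x y"
    using remote_part[OF t_range, where \<Omega>=\<Omega> and C=C and x=x] by blast
next
  fix D :: "'a set" and x
  assume "\<not> summable (\<lambda>n. (t n)\<^sup>2)" "dictionary D \<and> wga_seq D t x"
  then show "partial_weak_limit x 0" using wga_part[OF t_range, where D=D and x=x] by blast
next
  assume inf: "\<forall>B::'b set. finite B \<longrightarrow> span B \<noteq> UNIV"
  have main: "\<exists>(D::'b set) x. dictionary D \<and> wga_seq D t x \<and> \<not> partial_weak_limit x 0
           \<and> (\<exists>g1\<in>D. \<exists>g2\<in>D. g1 \<bullet> g2 = 0 \<and> g2 \<bullet> g2 = 1)" if sm: "summable (\<lambda>n. (t n)\<^sup>2)"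
  proof -
    obtain N where N: "\<forall>m\<ge>N. \<forall>n. norm (\<Sum>k\<in>{m..<n}. (t k)^2) < 1/2"
      using sm unfolding summable_Cauchy by (meson divide_pos_pos zero_less_one zero_less_numeral)
    have Nt: "\<forall>n. (\<Sum>k\<in>{N..<n}. (t k)^2) \<le> 1/2"
    proof
      fix n show "(\<Sum>k\<in>{N..<n}. (t k)^2) \<le> 1/2" using N[rule_format, of N n] by simp
    qed
    obtain e :: "nat \<Rightarrow> 'b" where e: "\<forall>i j. e i \<bullet> e j = (if i = j then 1 else 0)"
      using orthonormal_seq[OF inf] by blast
    show ?thesis by (rule construction[OF e t_range Nt])
  qed
  {
    assume H: "\<forall>(\<Omega>::'b set set) (C::'b set \<Rightarrow> 'b set) x.
            (\<exists>\<alpha>\<in>\<Omega>. \<exists>\<beta>\<in>\<Omega>. \<alpha> \<noteq> \<beta>) \<and> (\<forall>\<alpha>\<in>\<Omega>. closed (C \<alpha>) \<and> convex (C \<alpha>))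
            \<and> (\<Inter>\<alpha>\<in>\<Omega>. C \<alpha>) \<noteq> {} \<and> remote_proj_seq \<Omega> C t x
            \<longrightarrow> (\<exists>y\<in>(\<Inter>\<alpha>\<in>\<Omega>. C \<alpha>). partial_weak_limit x y)"
    show "\<not> summable (\<lambda>n. (t n)\<^sup>2)"
    proof
      assume sm: "summable (\<lambda>n. (t n)\<^sup>2)"
      obtain D :: "'b set" and x where dic: "dictionary D" and wg: "wga_seq D t x"
        and np: "\<not> partial_weak_limit x 0" and g12: "\<exists>g1\<in>D. \<exists>g2\<in>D. g1 \<bullet> g2 = 0 \<and> g2 \<bullet> g2 = 1"
        using main[OF sm] by blast
      define H where "H g = {z. g \<bullet> z = (0::real)}" for g :: 'b
      have unit: "norm g = 1" if "g \<in> D" for g using dic that by (simp add: dictionary_def)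
      have c1: "\<exists>\<alpha>\<in>H ` D. \<exists>\<beta>\<in>H ` D. \<alpha> \<noteq> \<beta>"
      proof -
        obtain g1 g2 where g: "g1 \<in> D" "g2 \<in> D" "g1 \<bullet> g2 = 0" "g2 \<bullet> g2 = 1" using g12 by blast
        have "g2 \<in> H g1" "g2 \<notin> H g2" using g by (auto simp: H_def)
        then have "H g1 \<noteq> H g2" by blast
        then show ?thesis using g by blast
      qed
      have c2: "\<forall>\<alpha>\<in>H ` D. closed ((\<lambda>A. A) \<alpha>) \<and> convex ((\<lambda>A. A) \<alpha>)"
        using hyperplane_props(1,2)[OF unit] by (auto simp: H_def)
      have c3: "(\<Inter>\<alpha>\<in>H ` D. (\<lambda>A. A) \<alpha>) \<noteq> {}"
      proof -
        have "0 \<in> (\<Inter>\<alpha>\<in>H ` D. (\<lambda>A. A) \<alpha>)" by (auto simp: H_def)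
        then show ?thesis by blast
      qed
      have c4: "remote_proj_seq (H ` D) (\<lambda>A. A) t x"
        using wga_to_remote[OF dic wg] by (simp add: H_def)
      obtain y where y: "y \<in> (\<Inter>\<alpha>\<in>H ` D. (\<lambda>A. A) \<alpha>)" and pw: "partial_weak_limit x y"
        using H[rule_format, of "H ` D" "\<lambda>A. A" x] c1 c2 c3 c4 by blast
      have "\<forall>g\<in>D. g \<bullet> y = 0" using y by (auto simp: H_def)
      then have "y = 0" by (rule dict_orth_zero[OF dic])
      then show False using pw np by simp
    qed
  }
  {
    assume H: "\<forall>(D::'b set) x. dictionary D \<and> wga_seq D t x \<longrightarrow> partial_weak_limit x 0"
    show "\<not> summable (\<lambda>n. (t n)\<^sup>2)"
    proof
      assume sm: "summable (\<lambda>n. (t n)\<^sup>2)"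
      then show False using main[OF sm] H by blast
    qed
  }
qed


end
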